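(* Let $1<\alpha<2$ and let $N\ge 3$ be an integer. Define, for $1\le i\le N-1$, $$\widetilde b_{i,i}=2\big[(i+1)^{3-\alpha}-2(3-\alpha)i^{2-\alpha}-(i-1)^{3-\alpha}\big]+2\big[(N-i+1)^{3-\alpha}-2(3-\alpha)(N-i)^{2-\alpha}-(N-i-1)^{3-\alpha}\big],$$ and for $1\le i\le N-2$, $$\widetilde b_{i,i+1}=-2\big[(i+1)^{3-\alpha}-i^{3-\alpha}\big]+(3-\alpha)\big[(i+1)^{2-\alpha}+i^{2-\alpha}\big]-2\big[(N-i)^{3-\alpha}-(N-i-1)^{3-\alpha}\big]+(3-\alpha)\big[(N-i)^{2-\alpha}+(N-i-1)^{2-\alpha}\big].$$ Let $B_h=(b_{i,j})_{i,j=1}^{N-1}$ be the symmetric matrix with $b_{i,i}=8-2^{4-\alpha}+\widetilde b_{i,i}$ ($1\le i\le N-1$), $b_{i,i+1}=b_{i+1,i}=-7-3^{3-\alpha}+2^{5-\alpha}+\widetilde b_{i,i+1}$ ($1\le i\le N-2$), and, for $m=|j-i|\ge 2$, $$b_{i,j}=-(m+2)^{3-\alpha}+4(m+1)^{3-\alpha}-6m^{3-\alpha}+4(m-1)^{3-\alpha}-(m-2)^{3-\alpha}.$$ Then: (1) $b_{i,j}<0$ for all $j\neq i$, $\widetilde b_{i,i+1}<0$ for $1\le i\le N-2$, and $\widetilde b_{i,i}<0$ for $1\le i\le N-1$; (2) for every $1\le i\le N-1$, $\sum_{j=1}^{N-1}b_{i,j}>0$ and $b_{i,i}>\sum_{j\neq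 i}|b_{i,j}|>0$.
   Context: Here $0^{p}=0$ for $p>0$. The matrix $B_h$ is (up to the positive factor $\kappa_\alpha/(h^{\alpha-1}\Gamma(4-\alpha))$, $\kappa_\alpha=-1/(2\cos(\alpha\pi/2))$, $h=b/N$) the stiffness matrix of the piecewise linear finite element discretization on the uniform mesh $x_i=ih$ of $(0,b)$ of the one-dimensional fractional Laplacian $C_\alpha\int_{0}^{b}\frac{u(x)-u(y)}{|x-y|^{1+\alpha}}dy$ with zero exterior condition. *)

theory Defs
  imports "HOL-Analysis.Analysis"
begin

text \<open>Note: real powr satisfies 0 powr p = 0, matching the convention 0^p = 0 for p > 0.
All bases below are nonnegative.\<close>

definition btil_diag :: "real \<Rightarrow> nat \<Rightarrow> nat \<Rightarrow> real" where
  "btil_diag \<alpha> N i =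
     2 * ((real i + 1) powr (3 - \<alpha>) - 2 * (3 - \<alpha>) * (real i) powr (2 - \<alpha>)
          - (real i - 1) powr (3 - \<alpha>))
   + 2 * ((real N - real i + 1) powr (3 - \<alpha>) - 2 * (3 - \<alpha>) * (real N - real i) powr (2 - \<alpha>)
          - (real N - real i - 1) powr (3 - \<alpha>))"

definition btil_off :: "real \<Rightarrow> nat \<Rightarrow> nat \<Rightarrow> real" where
  "btil_off \<alpha> N i =
     - (2 * ((real i + 1) powr (3 - \<alpha>) - (real i) powr (3 - \<alpha>)))
     + (3 - \<alpha>) * ((real i + 1) powr (2 - \<alpha>) + (real i) powr (2 - \<alpha>))
     - 2 * ((real N - real i) powr (3 - \<alpha>) - (real N - real i - 1) powr (3 - \<alpha>))
     + (3 - \<alpha>) * ((real N - real i) powr (2 - \<alpha>) + (real N - real i - 1) powr (2 - \<alpha>))"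

definition bentry :: "real \<Rightarrow> nat \<Rightarrow> nat \<Rightarrow> nat \<Rightarrow> real" where
  "bentry \<alpha> N i j =
     (if i = j then 8 - 2 powr (4 - \<alpha>) + btil_diag \<alpha> N i
      else if j = i + 1 then -7 - 3 powr (3 - \<alpha>) + 2 powr (5 - \<alpha>) + btil_off \<alpha> N i
      else if i = j + 1 then -7 - 3 powr (3 - \<alpha>) + 2 powr (5 - \<alpha>) + btil_off \<alpha> N j
      else (let m = real (if i \<le> j then j - i else i - j) in
        - ((m + 2) powr (3 - \<alpha>)) + 4 * (m + 1) powr (3 - \<alpha>) - 6 * m powr (3 - \<alpha>)
        + 4 * (m - 1) powr (3 - \<alpha>) - (m - 2) powr (3 - \<alpha>)))"

end

theory Submission
  imports Defs
begin


definition dlt :: "(real \<Rightarrow> real) \<Rightarrow> real \<Rightarrow> real" where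
  "dlt f = (\<lambda>y. f (y + 1) - f y)"

lemma mvt_open:
  fixes f f' :: "real \<Rightarrow> real"
  assumes "a < b" "continuous_on {a..b} f"
    "\<And>x. a < x \<Longrightarrow> x < b \<Longrightarrow> (f has_real_derivative f' x) (at x)"
  shows "\<exists>z. a < z \<and> z < b \<and> f b - f a = (b - a) * f' z"
proof -
  have "\<And>x. a < x \<Longrightarrow> x < b \<Longrightarrow> f differentiable (at x)"
    using assms(3) real_differentiable_def by blast
  from MVT[OF assms(1,2) this] obtain l z where
    z: "a < z" "z < b" "DERIV f z :> l" "f b - f a = (b - a) * l" by blast
  have "l = f' z" using DERIV_unique[OF z(3) assms(3)[OF z(1,2)]] .
  thus ?thesis using z by blast
qed

lemma diff_pos:
  fixes d :: "nat \<Rightarrow> real \<Rightarrow> real"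
  assumes "n \<ge> 1" "continuous_on {x..x + real n} (d 0)"
    "\<forall>m<n. \<forall>t. x < t \<and> t < x + real n \<longrightarrow> (d m has_real_derivative d (Suc m) t) (at t)"
    "\<forall>t. x < t \<and> t < x + real n \<longrightarrow> d n t > 0"
  shows "(dlt ^^ n) (d 0) x > 0"
  using assms
proof (induction n arbitrary: d rule: nat_induct_at_least)
  case base
  have "d 0 x < d 0 (x + 1)"
    apply (rule DERIV_pos_imp_increasing_open[of x "x+1" "d 0"])
    using base by auto
  then show ?case by (simp add: dlt_def)
next
  case (Suc n)
  define d' where "d' = (\<lambda>m y. d m (y + 1) - d m y)"
  have c: "continuous_on {x..x + real n} (d' 0)"
  proof -
    have c0: "continuous_on {x..x + real n} (d 0)"
      by (rule continuous_on_subset[OF Suc.prems(1)]) auto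
    have c1: "continuous_on {x..x + real n} (\<lambda>y. d 0 (y + 1))"
      by (rule continuous_on_compose2[OF Suc.prems(1)]) (auto intro!: continuous_intros)
    show ?thesis unfolding d'_def by (intro continuous_intros c0 c1)
  qed
  have dd: "\<forall>m<n. \<forall>t. x < t \<and> t < x + real n \<longrightarrow> (d' m has_real_derivative d' (Suc m) t) (at t)"
  proof (intro allI impI)
    fix m t assume m: "m < n" and t: "x < t \<and> t < x + real n"
    have h1: "(d m has_real_derivative d (Suc m) (t+1)) (at (t+1))"
      using Suc.prems(2) m t by auto
    have h2: "(d m has_real_derivative d (Suc m) t) (at t)"
      using Suc.prems(2) m t by auto
    have h3: "((\<lambda>y. d m (y + 1)) has_real_derivative d (Suc m) (t+1)) (at t)"
      using h1 DERIV_shift[of "d m" _ t 1] by simp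
    show "(d' m has_real_derivative d' (Suc m) t) (at t)"
      unfolding d'_def using DERIV_diff[OF h3 h2] by simp
  qed
  have pos: "\<forall>t. x < t \<and> t < x + real n \<longrightarrow> d' n t > 0"
  proof (intro allI impI)
    fix t assume t: "x < t \<and> t < x + real n"
    have der: "\<And>s. t \<le> s \<Longrightarrow> s \<le> t + 1 \<Longrightarrow> (d n has_real_derivative d (Suc n) s) (at s)"
      using Suc.prems(2) t by auto
    have "continuous_on {t..t+1} (d n)"
      by (rule DERIV_atLeastAtMost_imp_continuous_on) (use der in blast)
    have "d n t < d n (t + 1)"
    proof (rule DERIV_pos_imp_increasing_open[of t "t+1" "d n"])
      fix s assume s: "t < s" "s < t + 1"
      have "x < s \<and> s < x + real (Suc n)" using s t by auto
      then show "\<exists>y. DERIV (d n) s :> y \<and> y > 0"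
        using der[of s] Suc.prems(3) s by auto
    qed (use \<open>continuous_on {t..t+1} (d n)\<close> in auto)
    then show "d' n t > 0" by (simp add: d'_def)
  qed
  have "(dlt ^^ n) (d' 0) x > 0" using Suc.IH[OF c dd pos] .
  moreover have "d' 0 = dlt (d 0)" by (simp add: d'_def dlt_def)
  moreover have "(dlt ^^ Suc n) (d 0) = (dlt ^^ n) (dlt (d 0))"
    by (simp only: funpow_Suc_right comp_def)
  ultimately show ?case by simp
qed


lemma dlt4: "(dlt ^^ 4) g x = g (x+4) - 4 * g (x+3) + 6 * g (x+2) - 4 * g (x+1) + g x"
  by (simp add: dlt_def numeral_eq_Suc algebra_simps)

lemma dlt2: "(dlt ^^ 2) g x = g (x+2) - 2 * g (x+1) + g x"
  by (simp add: dlt_def numeral_eq_Suc algebra_simps)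

lemma powr_family_deriv:
  fixes p t :: real
  assumes "t > 0"
  shows "((\<lambda>y. (\<Prod>i<k. (p - real i)) * y powr (p - real k)) has_real_derivative
          (\<Prod>i<Suc k. (p - real i)) * t powr (p - real (Suc k))) (at t)"
proof -
  have "((\<lambda>y. (\<Prod>i<k. (p - real i)) * y powr (p - real k)) has_real_derivative
          (\<Prod>i<k. (p - real i)) * ((p - real k) * t powr (p - real k - 1))) (at t)"
    by (rule DERIV_cmult) (rule has_real_derivative_powr[OF assms])
  moreover have "(\<Prod>i<k. (p - real i)) * ((p - real k) * t powr (p - real k - 1)) =
     (\<Prod>i<Suc k. (p - real i)) * t powr (p - real (Suc k))"
    by (simp add: algebra_simps)
  ultimately show ?thesis by simp
qed

lemma am_neg:
  fixes \<alpha> m :: real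
  assumes "1 < \<alpha>" "\<alpha> < 2" "m \<ge> 2"
  shows "- ((m + 2) powr (3 - \<alpha>)) + 4 * (m + 1) powr (3 - \<alpha>) - 6 * m powr (3 - \<alpha>)
        + 4 * (m - 1) powr (3 - \<alpha>) - (m - 2) powr (3 - \<alpha>) < 0"
proof -
  define p where "p = 3 - \<alpha>"
  define d where "d = (\<lambda>k y. (\<Prod>i<k. (p - real i)) * y powr (p - real k))"
  have d0: "d 0 = (\<lambda>y. y powr p)" by (simp add: d_def)
  have "(dlt ^^ 4) (d 0) (m - 2) > 0"
  proof (rule diff_pos)
    show "continuous_on {m - 2..m - 2 + real 4} (d 0)"
      unfolding d0 using assms
      by (intro continuous_on_powr') (auto intro!: continuous_intros simp: p_def)
    show "\<forall>k<4. \<forall>t. m - 2 < t \<and> t < m - 2 + real 4 \<longrightarrow>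
        (d k has_real_derivative d (Suc k) t) (at t)"
    proof (intro allI impI)
      fix k t assume "k < (4::nat)" "m - 2 < t \<and> t < m - 2 + real 4"
      then have "t > 0" using assms by auto
      show "(d k has_real_derivative d (Suc k) t) (at t)"
        unfolding d_def by (rule powr_family_deriv[OF \<open>t > 0\<close>])
    qed
    show "\<forall>t. m - 2 < t \<and> t < m - 2 + real 4 \<longrightarrow> 0 < d 4 t"
    proof (intro allI impI)
      fix t assume t: "m - 2 < t \<and> t < m - 2 + real 4"
      have "(\<Prod>i<4. (p - real i)) = p * (p - 1) * (p - 2) * (p - 3)"
        by (simp add: numeral_eq_Suc)
      moreover have "p * (p - 1) * (p - 2) * (p - 3) > 0"
      proof -
        have "p > 0" "p - 1 > 0" "p - 2 < 0" "p - 3 < 0" using assms by (auto simp: p_def)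
        then have "p * (p - 1) > 0" "(p - 2) * (p - 3) > 0"
          by (auto intro: mult_pos_pos mult_neg_neg)
        then show ?thesis by (metis mult.assoc mult_pos_pos)
      qed
      moreover have "t powr (p - real 4) > 0" using t assms by auto
      ultimately show "0 < d 4 t" by (simp add: d_def)
    qed
  qed simp
  then show ?thesis
    unfolding dlt4 d0 p_def by (simp add: algebra_simps)
qed



lemma dpow_plus:
  fixes k t r :: real
  assumes "k + t > 0"
  shows "((\<lambda>t. (k + t) powr r) has_real_derivative r * (k + t) powr (r - 1)) (at t)"
  using assms by (auto intro!: derivative_eq_intros)

lemma dpow_minus:
  fixes k t r :: real
  assumes "k - t > 0"
  shows "((\<lambda>t. (k - t) powr r) has_real_derivative - (r * (k - t) powr (r - 1))) (at t)"
  using assms by (auto intro!: derivative_eq_intros)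


lemma cont_powr_shift:
  fixes a b k s r :: real
  assumes "r > 0" "\<And>t. a \<le> t \<Longrightarrow> t \<le> b \<Longrightarrow> k + s * t \<ge> 0"
  shows "continuous_on {a..b} (\<lambda>t. (k + s * t) powr r)"
  using assms by (intro continuous_on_powr') (auto intro!: continuous_intros)

lemma phi_neg:
  fixes \<alpha> k :: real
  assumes "1 < \<alpha>" "\<alpha> < 2" "k \<ge> 0"
  shows "- (2 * ((k + 1) powr (3 - \<alpha>) - k powr (3 - \<alpha>)))
     + (3 - \<alpha>) * ((k + 1) powr (2 - \<alpha>) + k powr (2 - \<alpha>)) < 0"
proof -
  define p where "p = 3 - \<alpha>"
  define q where "q = 2 - \<alpha>"
  have pq: "p - 1 = q" "q > 0" "q < 1" "p > 0" using assms by (auto simp: p_def q_def)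
  define \<psi> where "\<psi> = (\<lambda>t. 2 * ((k + 1 * t) powr p - k powr p) - p * t * ((k + 1 * t) powr q + k powr q))"
  have "\<psi> 0 < \<psi> 1"
  proof (rule DERIV_pos_imp_increasing_open[of 0 1 \<psi>])
    show "continuous_on {0..1} \<psi>" unfolding \<psi>_def using assms pq
      by (intro continuous_intros cont_powr_shift) auto
    fix t :: real assume t: "0 < t" "t < 1"
    have kt: "k + t > 0" using t assms by auto
    have D: "(\<psi> has_real_derivative
       2 * (p * (k + t) powr (p - 1)) - (p * ((k + t) powr q + k powr q) + p * t * (q * (k + t) powr (q - 1)))) (at t)"
      unfolding \<psi>_def using kt
      by (auto intro!: derivative_eq_intros)
    obtain z where z: "k < z" "z < k + t" "(k + t) powr q - k powr q = (k + t - k) * (q * z powr (q - 1))"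
    proof -
      have "\<exists>z. k < z \<and> z < k + t \<and> (k + t) powr q - k powr q = (k + t - k) * (q * z powr (q - 1))"
      proof (rule mvt_open)
        show "continuous_on {k..k + t} (\<lambda>y. y powr q)" using assms pq
          by (intro continuous_on_powr') (auto intro!: continuous_intros)
        fix y assume "k < y" "y < k + t"
        then show "((\<lambda>y. y powr q) has_real_derivative q * y powr (q - 1)) (at y)"
          using assms by (intro has_real_derivative_powr) auto
      qed (use t in auto)
      then show ?thesis using that by blast
    qed
    have "z powr (q - 1) > (k + t) powr (q - 1)"
      using z assms pq by (intro powr_less_mono2_neg) auto
    then have "t * (q * z powr (q - 1)) > t * (q * (k + t) powr (q - 1))"
      using t pq by (intro mult_strict_left_mono) auto
    then have "2 * (p * (k + t) powr (p - 1)) - (p * ((k + t) powr q + k powr q) + p * t * (q * (k + t) powr (q - 1))) > 0"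
      using z pq
      by (simp add: algebra_simps) (smt (verit) mult_strict_left_mono pq(4) ring_class.ring_distribs(1))
    then show "\<exists>y. (\<psi> has_real_derivative y) (at t) \<and> 0 < y" using D by blast
  qed auto
  then show ?thesis by (simp add: \<psi>_def p_def q_def algebra_simps)
qed


lemma mvt_powr:
  fixes a b r :: real
  assumes "0 \<le> a" "a < b" "r > 0"
  shows "\<exists>z. a < z \<and> z < b \<and> b powr r - a powr r = (b - a) * (r * z powr (r - 1))"
proof (rule mvt_open)
  show "continuous_on {a..b} (\<lambda>y. y powr r)" using assms
    by (intro continuous_on_powr') (auto intro!: continuous_intros)
  fix y assume "a < y" "y < b"
  then show "((\<lambda>y. y powr r) has_real_derivative r * y powr (r - 1)) (at y)"
    using assms by (intro has_real_derivative_powr) auto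
qed (use assms in auto)

lemma chi_neg:
  fixes \<alpha> k :: real
  assumes "1 < \<alpha>" "\<alpha> < 2" "k \<ge> 1"
  shows "(k + 1) powr (3 - \<alpha>) - 2 * (3 - \<alpha>) * k powr (2 - \<alpha>) - (k - 1) powr (3 - \<alpha>) < 0"
proof -
  define p where "p = 3 - \<alpha>"
  define q where "q = 2 - \<alpha>"
  have pq: "p - 1 = q" "q > 0" "q < 1" "p > 0" using assms by (auto simp: p_def q_def)
  define \<psi> where "\<psi> = (\<lambda>t. (k + 1 * t) powr p - (k + (-1) * t) powr p - 2 * p * t * k powr q)"
  have "\<psi> 0 > \<psi> 1"
  proof (rule DERIV_neg_imp_decreasing_open[of 0 1 \<psi>])
    show "continuous_on {0..1} \<psi>" unfolding \<psi>_def using assms pq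
      by (intro continuous_intros cont_powr_shift) auto
    fix t :: real assume t: "0 < t" "t < 1"
    have kt: "k + t > 0" "k + (-1) * t > 0" using t assms by auto
    have D: "(\<psi> has_real_derivative
       p * (k + 1 * t) powr (p - 1) * 1 - p * (k + (-1) * t) powr (p - 1) * (-1) - 2 * p * k powr q) (at t)"
      unfolding \<psi>_def using kt
      by (auto intro!: derivative_eq_intros)
    obtain z1 where z1: "k - t < z1" "z1 < k" "k powr q - (k - t) powr q = (k - (k - t)) * (q * z1 powr (q - 1))"
      using mvt_powr[of "k - t" k q] t assms pq by auto
    obtain z2 where z2: "k < z2" "z2 < k + t" "(k + t) powr q - k powr q = (k + t - k) * (q * z2 powr (q - 1))"
      using mvt_powr[of k "k + t" q] t assms pq by auto
    have "z2 powr (q - 1) < z1 powr (q - 1)"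
      using z1 z2 t assms pq by (intro powr_less_mono2_neg) auto
    then have "t * (q * z2 powr (q - 1)) < t * (q * z1 powr (q - 1))"
      using t pq by (intro mult_strict_left_mono) auto
    then have "(k + t) powr q + (k - t) powr q - 2 * k powr q < 0"
      using z1(3) z2(3) by simp
    then have "p * ((k + t) powr q + (k - t) powr q - 2 * k powr q) < 0"
      using pq by (simp add: mult_pos_neg)
    then have "p * (k + 1 * t) powr (p - 1) * 1 - p * (k + (-1) * t) powr (p - 1) * (-1) - 2 * p * k powr q < 0"
      using pq by (simp add: algebra_simps)
    then show "\<exists>y. (\<psi> has_real_derivative y) (at t) \<and> y < 0" using D by blast
  qed auto
  then show ?thesis by (simp add: \<psi>_def p_def q_def algebra_simps)
qed


lemma mvt_powr':
  fixes a b r :: real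
  assumes "0 < a" "a < b"
  shows "\<exists>z. a < z \<and> z < b \<and> b powr r - a powr r = (b - a) * (r * z powr (r - 1))"
proof (rule mvt_open)
  show "continuous_on {a..b} (\<lambda>y. y powr r)" using assms
    by (intro continuous_on_powr') (auto intro!: continuous_intros)
  fix y assume "a < y" "y < b"
  then show "((\<lambda>y. y powr r) has_real_derivative r * y powr (r - 1)) (at y)"
    using assms by (intro has_real_derivative_powr) auto
qed (use assms in auto)

lemma V_pos2:
  fixes q k :: real
  assumes "0 < q" "q < 1" "k \<ge> 2"
  shows "-((k+1) powr (q+1) - 3*k powr (q+1) + 3*(k-1) powr (q+1) - (k-2) powr (q+1))
     + (q+1)*((k+1) powr q - 2*k powr q + (k-1) powr q) > 0"
proof -
  define d where "d = (\<lambda>n::nat. if n = 0 then (\<lambda>y. (q+1)*(y+1) powr q - (y+1) powr (q+1) + y powr (q+1))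
     else if n = 1 then (\<lambda>y. (q+1)*q*(y+1) powr (q-1) - (q+1)*(y+1) powr q + (q+1)*y powr q)
     else (\<lambda>y. (q+1)*q*(q-1)*(y+1) powr (q-2) - (q+1)*q*(y+1) powr (q-1) + (q+1)*q*y powr (q-1)))"
  have "(dlt ^^ 2) (d 0) (k - 2) > 0"
  proof (rule diff_pos)
    show "continuous_on {k - 2..k - 2 + real 2} (d 0)"
      unfolding d_def using assms
      by (auto intro!: continuous_intros continuous_on_powr')
    show "\<forall>m<2. \<forall>t. k - 2 < t \<and> t < k - 2 + real 2 \<longrightarrow>
        (d m has_real_derivative d (Suc m) t) (at t)"
    proof (intro allI impI)
      fix m t assume m: "m < (2::nat)" and t: "k - 2 < t \<and> t < k - 2 + real 2"
      then have t0: "t > 0" using assms by auto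
      show "(d m has_real_derivative d (Suc m) t) (at t)"
      proof (cases "m = 0")
        case True
        then show ?thesis unfolding d_def using t0
          by (auto intro!: derivative_eq_intros simp: algebra_simps)
      next
        case False
        then have "m = 1" using m by auto
        then show ?thesis unfolding d_def using t0
          by (auto intro!: derivative_eq_intros simp: algebra_simps)
      qed
    qed
    show "\<forall>t. k - 2 < t \<and> t < k - 2 + real 2 \<longrightarrow> 0 < d 2 t"
    proof (intro allI impI)
      fix t assume t: "k - 2 < t \<and> t < k - 2 + real 2"
      then have t0: "t > 0" using assms by auto
      obtain z where z: "t < z" "z < t + 1" "(t + 1) powr (q - 1) - t powr (q - 1) = (t + 1 - t) * ((q - 1) * z powr (q - 1 - 1))"
        using mvt_powr'[of t "t+1" "q - 1"] t0 by auto
      have "z powr (q - 2) > (t + 1) powr (q - 2)"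
        using z t0 assms by (intro powr_less_mono2_neg) auto
      then have "(q - 1) * z powr (q - 2) < (q - 1) * (t + 1) powr (q - 2)"
        using assms by (intro mult_strict_left_mono_neg) auto
      then have "(q-1)*(t+1) powr (q-2) - (t+1) powr (q-1) + t powr (q-1) > 0"
        using z(3) by simp
      then have "((q+1)*q) * ((q-1)*(t+1) powr (q-2) - (t+1) powr (q-1) + t powr (q-1)) > 0"
        using assms by (intro mult_pos_pos) auto
      then show "0 < d 2 t" unfolding d_def by (simp add: algebra_simps)
    qed
  qed simp
  moreover have "k - 2 + 2 = k" "k - 2 + 1 = k - 1" "k - 1 + 1 = k" by auto
  ultimately show ?thesis unfolding dlt2 d_def by (simp add: algebra_simps)
qed


lemma c1_neg:
  fixes \<alpha> :: real
  assumes "1 < \<alpha>" "\<alpha> < 2"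
  shows "-7 - 3 powr (3 - \<alpha>) + 2 powr (5 - \<alpha>) < 0"
proof -
  define p where "p = 3 - \<alpha>"
  have p: "1 < p" "p < 2" using assms by (auto simp: p_def)
  have l: "9 * ln 3 < 16 * ln (2::real)"
  proof -
    have a: "ln ((3::real) ^ 9) = 9 * ln 3" using ln_realpow[of 3 9] by simp
    have b: "ln ((2::real) ^ 16) = 16 * ln 2" using ln_realpow[of 2 16] by simp
    have "ln ((3::real) ^ 9) < ln (2 ^ 16)" by (subst ln_less_cancel_iff) auto
    then show ?thesis unfolding a b .
  qed
  define h where "h = (\<lambda>s::real. 4 * 2 powr s - 3 powr s)"
  have "h p < h 2"
  proof (rule DERIV_pos_imp_increasing[of p 2 h])
    fix s :: real assume s: "p \<le> s" "s \<le> 2"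
    have D: "(h has_real_derivative 4 * (1 * ln 2 * 2 powr s) - 1 * ln 3 * 3 powr s) (at s)"
      unfolding h_def by (auto intro!: derivative_eq_intros)
    have "(3::real) powr s = 2 powr s * (3/2) powr s"
      by (simp add: powr_mult[symmetric])
    moreover have "(3/2::real) powr s \<le> (3/2) powr 2"
      using s by (intro powr_mono) auto
    moreover have "(3/2::real) powr 2 = 9/4" by (simp add: powr_numeral power2_eq_square)
    ultimately have "3 powr s \<le> 2 powr s * (9/4::real)"
      by (metis mult_left_mono powr_ge_zero)
    then have A: "ln 3 * 3 powr s \<le> ln 3 * (2 powr s * (9/4::real))"
      by (intro mult_left_mono) auto
    have B: "(ln 3 * (9/4)) * 2 powr s < (4 * ln 2) * (2::real) powr s"
      using l by (intro mult_strict_right_mono) auto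
    have "ln 3 * (2 powr s * (9/4::real)) = (ln 3 * (9/4)) * 2 powr s" by simp
    moreover have "4 * (1 * ln 2 * 2 powr s) = (4 * ln 2) * (2::real) powr s" by simp
    ultimately have "4 * (1 * ln 2 * 2 powr s) - 1 * ln 3 * 3 powr s > 0"
      using A B by linarith
    then show "\<exists>y. (h has_real_derivative y) (at s) \<and> 0 < y" using D by blast
  qed (use p in auto)
  moreover have "h 2 = 7" by (simp add: h_def powr_numeral)
  moreover have "(2::real) powr (5 - \<alpha>) = 4 * 2 powr p"
  proof -
    have "(2::real) powr (5 - \<alpha>) = 2 powr (2 + p)" by (simp add: p_def)
    also have "\<dots> = 4 * 2 powr p" by (simp add: powr_add powr_numeral)
    finally show ?thesis .
  qed
  ultimately show ?thesis by (simp add: h_def p_def)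
qed



definition Gf :: "real \<Rightarrow> real \<Rightarrow> real" where "Gf \<alpha> x = \<bar>x\<bar> powr (3 - \<alpha>)"
definition Ah :: "real \<Rightarrow> real \<Rightarrow> real" where
  "Ah \<alpha> x = -(Gf \<alpha> (x+2) - 4 * Gf \<alpha> (x+1) + 6 * Gf \<alpha> x - 4 * Gf \<alpha> (x-1) + Gf \<alpha> (x-2))"
definition D3 :: "real \<Rightarrow> real \<Rightarrow> real" where
  "D3 \<alpha> x = Gf \<alpha> (x+3) - 3 * Gf \<alpha> (x+2) + 3 * Gf \<alpha> (x+1) - Gf \<alpha> x"
definition Uf :: "real \<Rightarrow> real \<Rightarrow> real" where
  "Uf \<alpha> k = -((k+1) powr (3-\<alpha>) - 3*k powr (3-\<alpha>) + 3*(k-1) powr (3-\<alpha>) - \<bar>k-2\<bar> powr (3-\<alpha>))"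
definition ch :: "real \<Rightarrow> real \<Rightarrow> real" where
  "ch \<alpha> k = (k + 1) powr (3 - \<alpha>) - 2 * (3 - \<alpha>) * k powr (2 - \<alpha>) - (k - 1) powr (3 - \<alpha>)"
definition ph :: "real \<Rightarrow> real \<Rightarrow> real" where
  "ph \<alpha> k = - (2 * ((k + 1) powr (3 - \<alpha>) - k powr (3 - \<alpha>)))
     + (3 - \<alpha>) * ((k + 1) powr (2 - \<alpha>) + k powr (2 - \<alpha>))"
definition Vf :: "real \<Rightarrow> real \<Rightarrow> real" where
  "Vf \<alpha> k = Uf \<alpha> k + 2 * ch \<alpha> k + ph \<alpha> k + ph \<alpha> (k - 1)"

lemma Ah_D3: "Ah \<alpha> x = -(D3 \<alpha> (x-1) - D3 \<alpha> (x-2))"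
proof -
  have e: "x - 1 + 3 = x + 2" "x - 1 + 2 = x + 1" "x - 1 + 1 = x" "x - 2 + 3 = x + 1" "x - 2 + 2 = x"
    "x - 2 + 1 = x - 1" by auto
  show ?thesis unfolding Ah_def D3_def e by simp
qed

lemma sum_Ah: "(\<Sum>j=1..n. Ah \<alpha> (real j - u)) = -D3 \<alpha> (real n - u - 1) + D3 \<alpha> (-u-1)"
proof (induction n)
  case 0
  then show ?case by simp
next
  case (Suc n)
  have e: "real (Suc n) - u - 1 = real n - u" "real (Suc n) - u - 2 = real n - u - 1"
    by auto
  have "(\<Sum>j=1..Suc n. Ah \<alpha> (real j - u)) = (\<Sum>j=1..n. Ah \<alpha> (real j - u)) + Ah \<alpha> (real (Suc n) - u)"
    by (rule sum.cl_ivl_Suc[THEN trans]) simp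
  also have "\<dots> = -D3 \<alpha> (real n - u - 1) + D3 \<alpha> (-u-1) + Ah \<alpha> (real (Suc n) - u)"
    using Suc by simp
  also have "\<dots> = -D3 \<alpha> (real (Suc n) - u - 1) + D3 \<alpha> (-u-1)"
    unfolding Ah_D3 e by simp
  finally show ?case .
qed

lemma D3_right: "k \<ge> 1 \<Longrightarrow> D3 \<alpha> (k - 2) = - Uf \<alpha> k"
proof -
  assume k: "k \<ge> 1"
  have e: "k - 2 + 3 = k + 1" "k - 2 + 2 = k" "k - 2 + 1 = k - 1" by auto
  show ?thesis unfolding D3_def Uf_def Gf_def e using k by simp
qed

lemma D3_left: "k \<ge> 1 \<Longrightarrow> D3 \<alpha> (-k-1) = Uf \<alpha> k"
proof -
  assume k: "k \<ge> 1"
  have e: "-k-1 + 3 = -(k - 2)" "-k-1 + 2 = -(k - 1)" "-k-1 + 1 = -k" by auto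
  have a: "\<bar>-k-1\<bar> = k+1" "\<bar>-(k-1)\<bar> = k - 1" "\<bar>-k\<bar> = k" "\<bar>-(k-2)\<bar> = \<bar>k-2\<bar>"
    using k by auto
  show ?thesis unfolding D3_def Uf_def Gf_def e a by (simp only:)
qed

lemma Ah_even: "Ah \<alpha> (-x) = Ah \<alpha> x"
proof -
  have e: "-x + 2 = -(x - 2)" "-x + 1 = -(x - 1)" "-x - 1 = -(x + 1)" "-x - 2 = -(x + 2)" by auto
  have g: "\<And>y. Gf \<alpha> (-y) = Gf \<alpha> y" by (simp add: Gf_def)
  show ?thesis unfolding Ah_def e g by linarith
qed

lemma Ah_far: "(m::real) \<ge> 2 \<Longrightarrow> Ah \<alpha> m = - ((m + 2) powr (3 - \<alpha>)) + 4 * (m + 1) powr (3 - \<alpha>) - 6 * m powr (3 - \<alpha>)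
        + 4 * (m - 1) powr (3 - \<alpha>) - (m - 2) powr (3 - \<alpha>)"
  unfolding Ah_def Gf_def by simp

lemma Ah_0: "Ah \<alpha> 0 = 8 - 2 powr (4 - \<alpha>)"
proof -
  have h: "(2::real) powr (4 - \<alpha>) = 2 * 2 powr (3 - \<alpha>)"
    using powr_add[of 2 1 "3 - \<alpha>"] by simp
  show ?thesis unfolding Ah_def Gf_def h by simp
qed

lemma Ah_1: "Ah \<alpha> 1 = -7 - 3 powr (3 - \<alpha>) + 2 powr (5 - \<alpha>)"
proof -
  have h: "(2::real) powr (5 - \<alpha>) = 4 * 2 powr (3 - \<alpha>)"
    using powr_add[of 2 2 "3 - \<alpha>"] by (simp add: powr_numeral)
  show ?thesis unfolding Ah_def Gf_def h by simp
qed


lemma Vf_pos: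
  fixes \<alpha> k :: real
  assumes "1 < \<alpha>" "\<alpha> < 2" "k = 1 \<or> k \<ge> 2"
  shows "Vf \<alpha> k > 0"
proof (cases "k = 1")
  case True
  have h: "(2::real) powr (3 - \<alpha>) = 2 * 2 powr (2 - \<alpha>)"
    using powr_add[of 2 1 "2 - \<alpha>"] by simp
  have "(2::real) powr (2 - \<alpha>) < 2 powr 1"
    using assms by (intro powr_less_mono) auto
  then have "(\<alpha> - 1) * (2 - 2 powr (2 - \<alpha>)) > 0" using assms by (intro mult_pos_pos) auto
  moreover have "Vf \<alpha> 1 = (\<alpha> - 1) * (2 - 2 powr (2 - \<alpha>))"
    unfolding Vf_def Uf_def ch_def ph_def by (simp add: h algebra_simps)
  ultimately show ?thesis using True by simp
next
  case False
  then have k: "k \<ge> 2" using assms by auto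
  have e: "2 - \<alpha> + 1 = 3 - \<alpha>" by simp
  have V: "-((k+1) powr (3-\<alpha>) - 3*k powr (3-\<alpha>) + 3*(k-1) powr (3-\<alpha>) - (k-2) powr (3-\<alpha>))
     + (3-\<alpha>)*((k+1) powr (2-\<alpha>) - 2*k powr (2-\<alpha>) + (k-1) powr (2-\<alpha>)) > 0"
    using V_pos2[of "2 - \<alpha>" k] assms k unfolding e by simp
  have "\<bar>k - 2\<bar> = k - 2" using k by simp
  then have "Vf \<alpha> k = -((k+1) powr (3-\<alpha>) - 3*k powr (3-\<alpha>) + 3*(k-1) powr (3-\<alpha>) - (k-2) powr (3-\<alpha>))
     + (3-\<alpha>)*((k+1) powr (2-\<alpha>) - 2*k powr (2-\<alpha>) + (k-1) powr (2-\<alpha>))"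
    unfolding Vf_def Uf_def ch_def ph_def by (simp add: algebra_simps)
  then show ?thesis using V by simp
qed



lemma bentry_split:
  "bentry \<alpha> N i j = Ah \<alpha> (real j - real i) + (if j = i then btil_diag \<alpha> N i else 0)
     + (if j = i + 1 then btil_off \<alpha> N i else 0) + (if i = j + 1 then btil_off \<alpha> N j else 0)"
proof -
  consider "j = i" | "j = i + 1" | "i = j + 1" | "j \<noteq> i \<and> j \<noteq> i + 1 \<and> i \<noteq> j + 1" by blast
  then show ?thesis
  proof cases
    case 1 then show ?thesis by (simp add: bentry_def Ah_0)
  next
    case 2 then show ?thesis by (simp add: bentry_def Ah_1)
  next
    case 3
    have "real j - real i = - 1" using 3 by simp
    then have "Ah \<alpha> (real j - real i) = Ah \<alpha> 1" using Ah_even[of \<alpha> 1] by simp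
    then show ?thesis using 3 by (simp add: bentry_def Ah_1)
  next
    case 4
    show ?thesis
    proof (cases "i \<le> j")
      case True
      then have m: "real (j - i) \<ge> 2" "real j - real i = real (j - i)" using 4 by auto
      show ?thesis using 4 True unfolding bentry_def m(2) Ah_far[OF m(1)] by (simp add: Let_def)
    next
      case False
      then have m: "real (i - j) \<ge> 2" "real j - real i = - real (i - j)" using 4 by auto
      show ?thesis using 4 False unfolding bentry_def m(2) Ah_even Ah_far[OF m(1)] by (simp add: Let_def)
    qed
  qed
qed

lemma ph_neg: "1 < \<alpha> \<Longrightarrow> \<alpha> < 2 \<Longrightarrow> k \<ge> 0 \<Longrightarrow> ph \<alpha> k < 0"
  unfolding ph_def by (rule phi_neg)

lemma ch_neg: "1 < \<alpha> \<Longrightarrow> \<alpha> < 2 \<Longrightarrow> k \<ge> 1 \<Longrightarrow> ch \<alpha> k < 0"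
  unfolding ch_def by (rule chi_neg)

lemma bd_eq: "btil_diag \<alpha> N i = 2 * ch \<alpha> (real i) + 2 * ch \<alpha> (real N - real i)"
  unfolding btil_diag_def ch_def by simp

lemma bo_eq: "btil_off \<alpha> N i = ph \<alpha> (real i) + ph \<alpha> (real N - real i - 1)"
  unfolding btil_off_def ph_def by simp

lemma bo_eq': "i \<ge> 1 \<Longrightarrow> btil_off \<alpha> N (i - 1) = ph \<alpha> (real i - 1) + ph \<alpha> (real N - real i)"
proof -
  assume i: "i \<ge> 1"
  have e: "real (i - 1) = real i - 1" "real i - 1 + 1 = real i" "real N - (real i - 1) = real N - real i + 1"
    "real N - (real i - 1) - 1 = real N - real i" using i by auto
  show ?thesis unfolding btil_off_def ph_def e by simp
qed


lemma offdiag_neg: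
  assumes a: "1 < \<alpha>" "\<alpha> < 2" and i: "i \<in> {1..N-1}" and j: "j \<in> {1..N-1}" and ji: "j \<noteq> i"
  shows "bentry \<alpha> N i j < 0"
proof -
  have c1: "-7 - 3 powr (3 - \<alpha>) + 2 powr (5 - \<alpha>) < (0::real)" using c1_neg[OF a] .
  consider "j = i + 1" | "i = j + 1" | "j \<noteq> i + 1 \<and> i \<noteq> j + 1" by blast
  then show ?thesis
  proof cases
    case 1
    then have "btil_off \<alpha> N i < 0" unfolding bo_eq using i j a
      by (auto intro!: add_neg_neg ph_neg)
    then show ?thesis using 1 c1 by (simp add: bentry_def)
  next
    case 2
    then have "btil_off \<alpha> N j < 0" unfolding bo_eq using i j a
      by (auto intro!: add_neg_neg ph_neg)
    then show ?thesis using 2 c1 by (simp add: bentry_def)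
  next
    case 3
    define m where "m = real (if i \<le> j then j - i else i - j)"
    have m2: "m \<ge> 2" using 3 ji unfolding m_def by auto
    have "bentry \<alpha> N i j = - ((m + 2) powr (3 - \<alpha>)) + 4 * (m + 1) powr (3 - \<alpha>) - 6 * m powr (3 - \<alpha>)
        + 4 * (m - 1) powr (3 - \<alpha>) - (m - 2) powr (3 - \<alpha>)"
      using 3 ji unfolding bentry_def m_def by (simp add: Let_def)
    then show ?thesis using am_neg[OF a m2] by simp
  qed
qed

lemma rowsum_pos:
  assumes a: "1 < \<alpha>" "\<alpha> < 2" and N: "N \<ge> 3" and i: "i \<in> {1..N-1}"
  shows "(\<Sum>j=1..N-1. bentry \<alpha> N i j) > 0"
proof -
  define u where "u = real i"
  define w where "w = real N - real i"
  have i1: "i \<ge> 1" "i \<le> N - 1" using i by auto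
  have u1: "u \<ge> 1" and w1: "w \<ge> 1" using i1 N by (auto simp: u_def w_def)
  have split: "(\<Sum>j=1..N-1. bentry \<alpha> N i j) =
      (\<Sum>j=1..N-1. Ah \<alpha> (real j - real i)) + (\<Sum>j=1..N-1. (if j = i then btil_diag \<alpha> N i else 0))
      + (\<Sum>j=1..N-1. (if j = i + 1 then btil_off \<alpha> N i else 0))
      + (\<Sum>j=1..N-1. (if j = i - 1 then btil_off \<alpha> N j else 0))"
  proof -
    have "\<And>j. (if i = j + 1 then btil_off \<alpha> N j else 0) = (if j = i - 1 then btil_off \<alpha> N j else 0)"
      using i1 by auto
    then show ?thesis unfolding bentry_split by (simp add: sum.distrib)
  qed
  have s1: "(\<Sum>j=1..N-1. Ah \<alpha> (real j - real i)) = Uf \<alpha> u + Uf \<alpha> w"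
  proof -
    have e1: "real (N - 1) - real i - 1 = w - 2" using N by (simp add: w_def of_nat_diff)
    have e2: "- real i - 1 = - u - 1" by (simp add: u_def)
    show ?thesis unfolding sum_Ah e1 e2 D3_right[OF w1] D3_left[OF u1] by simp
  qed
  have s2: "(\<Sum>j=1..N-1. (if j = i then btil_diag \<alpha> N i else 0)) = 2 * ch \<alpha> u + 2 * ch \<alpha> w"
    using i by (simp add: bd_eq u_def w_def)
  have s3: "(\<Sum>j=1..N-1. (if j = i + 1 then btil_off \<alpha> N i else 0)) =
      (if i \<le> N - 2 then ph \<alpha> u + ph \<alpha> (w - 1) else 0)"
    using i N by (auto simp: bo_eq u_def w_def)
  have s4: "(\<Sum>j=1..N-1. (if j = i - 1 then btil_off \<alpha> N j else 0)) =
      (if i \<ge> 2 then ph \<alpha> (u - 1) + ph \<alpha> w else 0)"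
  proof -
    have "(\<Sum>j=1..N-1. (if j = i - 1 then btil_off \<alpha> N j else 0)) =
      (if i - 1 \<in> {1..N-1} then btil_off \<alpha> N (i - 1) else 0)" by simp
    also have "\<dots> = (if i \<ge> 2 then ph \<alpha> (u - 1) + ph \<alpha> w else 0)"
      using i1 bo_eq'[of i \<alpha> N] by (auto simp: u_def w_def)
    finally show ?thesis .
  qed
  have Vu: "Vf \<alpha> u = Uf \<alpha> u + 2 * ch \<alpha> u + ph \<alpha> u + ph \<alpha> (u - 1)" by (simp add: Vf_def)
  have Vw: "Vf \<alpha> w = Uf \<alpha> w + 2 * ch \<alpha> w + ph \<alpha> w + ph \<alpha> (w - 1)" by (simp add: Vf_def)
  have S: "(\<Sum>j=1..N-1. bentry \<alpha> N i j) = Uf \<alpha> u + Uf \<alpha> w + 2 * ch \<alpha> u + 2 * ch \<alpha> w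
     + (if i \<le> N - 2 then ph \<alpha> u + ph \<alpha> (w - 1) else 0) + (if i \<ge> 2 then ph \<alpha> (u - 1) + ph \<alpha> w else 0)"
    unfolding split s1 s2 s3 s4 by simp
  consider "i = 1" | "i = N - 1" | "2 \<le> i \<and> i \<le> N - 2" using i1 N by linarith
  then show ?thesis
  proof cases
    case 1
    then have "u = 1" "w \<ge> 2" "i \<le> N - 2" "\<not> i \<ge> 2" using N by (auto simp: u_def w_def)
    moreover have "Vf \<alpha> u > 0" "Vf \<alpha> w > 0" using Vf_pos[OF a] calculation by auto
    moreover have "ph \<alpha> (u - 1) < 0" "ph \<alpha> w < 0" using ph_neg[OF a] calculation by auto
    ultimately show ?thesis unfolding S using Vu Vw by simp
  next
    case 2
    then have "w = 1" "u \<ge> 2" "\<not> i \<le> N - 2" "i \<ge> 2" using N by (auto simp: u_def w_def of_nat_diff)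
    moreover have "Vf \<alpha> u > 0" "Vf \<alpha> w > 0" using Vf_pos[OF a] calculation by auto
    moreover have "ph \<alpha> u < 0" "ph \<alpha> (w - 1) < 0" using ph_neg[OF a] calculation by auto
    ultimately show ?thesis unfolding S using Vu Vw by simp
  next
    case 3
    then have "w \<ge> 2" "u \<ge> 2" "i \<le> N - 2" "i \<ge> 2" using N by (auto simp: u_def w_def)
    moreover have "Vf \<alpha> u > 0" "Vf \<alpha> w > 0" using Vf_pos[OF a] calculation by auto
    ultimately show ?thesis unfolding S using Vu Vw by simp
  qed
qed

theorem lemma3p3:
  fixes \<alpha> :: real and N :: nat
  assumes "1 < \<alpha>" "\<alpha> < 2" "N \<ge> 3"
  shows "(\<forall>i\<in>{1..N-1}. \<forall>j\<in>{1..N-1}. j \<noteq> i \<longrightarrow> bentry \<alpha> N i j < 0)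
       \<and> (\<forall>i\<in>{1..N-2}. btil_off \<alpha> N i < 0)
       \<and> (\<forall>i\<in>{1..N-1}. btil_diag \<alpha> N i < 0)
       \<and> (\<forall>i\<in>{1..N-1}. (\<Sum>j=1..N-1. bentry \<alpha> N i j) > 0
            \<and> bentry \<alpha> N i i > (\<Sum>j\<in>{1..N-1}-{i}. \<bar>bentry \<alpha> N i j\<bar>)
            \<and> (\<Sum>j\<in>{1..N-1}-{i}. \<bar>bentry \<alpha> N i j\<bar>) > 0)"
proof (intro conjI ballI impI)
  fix i j assume "i \<in> {1..N-1}" "j \<in> {1..N-1}" "j \<noteq> i"
  then show "bentry \<alpha> N i j < 0" using offdiag_neg assms by blast
next
  fix i assume i: "i \<in> {1..N-2}"
  then show "btil_off \<alpha> N i < 0" unfolding bo_eq using assms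
    by (auto intro!: add_neg_neg ph_neg)
next
  fix i assume i: "i \<in> {1..N-1}"
  then show "btil_diag \<alpha> N i < 0" unfolding bd_eq using assms
    by (auto intro!: add_neg_neg ch_neg)
next
  fix i assume i: "i \<in> {1..N-1}"
  then show "(\<Sum>j=1..N-1. bentry \<alpha> N i j) > 0" using rowsum_pos assms by blast
next
  fix i assume i: "i \<in> {1..N-1}"
  have neg: "\<And>j. j \<in> {1..N-1} - {i} \<Longrightarrow> bentry \<alpha> N i j < 0" using offdiag_neg assms i by blast
  have abs: "(\<Sum>j\<in>{1..N-1}-{i}. \<bar>bentry \<alpha> N i j\<bar>) = - (\<Sum>j\<in>{1..N-1}-{i}. bentry \<alpha> N i j)"
    using neg by (simp add: sum_negf[symmetric] less_imp_le)
  have "(\<Sum>j=1..N-1. bentry \<alpha> N i j) = bentry \<alpha> N i i + (\<Sum>j\<in>{1..N-1}-{i}. bentry \<alpha> N i j)"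
    using i by (simp add: sum.remove)
  then show "bentry \<alpha> N i i > (\<Sum>j\<in>{1..N-1}-{i}. \<bar>bentry \<alpha> N i j\<bar>)"
    using rowsum_pos[OF assms(1,2,3) i] abs by linarith
next
  fix i assume i: "i \<in> {1..N-1}"
  define j0 where "j0 = (if i = 1 then 2 else 1::nat)"
  have j0: "j0 \<in> {1..N-1} - {i}" using i assms unfolding j0_def by auto
  have neg: "\<And>j. j \<in> {1..N-1} - {i} \<Longrightarrow> bentry \<alpha> N i j < 0" using offdiag_neg assms i by blast
  show "(\<Sum>j\<in>{1..N-1}-{i}. \<bar>bentry \<alpha> N i j\<bar>) > 0"
    by (rule sum_pos2[OF _ j0]) (use neg[OF j0] in auto)
qed


end
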